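(* Let $n\in\mathbb{N}$ and let $a=3$ or $a>5$ (real). Let $E_n(a,1)$ be the $(n+1)\times n$ matrix whose $(i,j)$ entry is $-a$ if $i=j$, $1$ if $j=i+1$, $a$ if $i=j+1$, $-1$ if $i=j+2$, and $0$ otherwise, and let $B_n(a,1)$ be the $(n+3)\times n$ matrix whose first row is $(1,0,\dots,0)$, whose rows $2,\dots,n+2$ are the rows of $E_n(a,1)$ in order, and whose last row is $(0,\dots,0,-1)$. For $1\le i<j<k\le n+3$, let $B_n(a,1)^{i,j,k}$ be the $n\times n$ matrix obtained by deleting the $i$-th, $j$-th and $k$-th rows of $B_n(a,1)$. Then $|B_n(a,1)^{i,j,k}|\neq0$.
   Context: $|M|$ denotes the determinant of a square matrix $M$. *)

theory Defs
  imports "Jordan_Normal_Form.Determinant" "Jordan_Normal_Form.DL_Submatrix"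
begin

definition E_mat :: "nat \<Rightarrow> real \<Rightarrow> real mat" where
  "E_mat n a = mat (n+1) n (\<lambda>(r,c).
      if r = c then - a
      else if c = r + 1 then 1
      else if r = c + 1 then a
      else if r = c + 2 then -1
      else 0)"

definition B_mat :: "nat \<Rightarrow> real \<Rightarrow> real mat" where
  "B_mat n a = mat (n+3) n (\<lambda>(r,c).
      if r = 0 then (if c = 0 then 1 else 0)
      else if r \<le> n + 1 then E_mat n a $$ (r - 1, c)
      else (if c = n - 1 then -1 else 0))"

text \<open>Delete rows i, j, k (1-based) of B_n(a,1).\<close>
definition B_del :: "nat \<Rightarrow> real \<Rightarrow> nat \<Rightarrow> nat \<Rightarrow> nat \<Rightarrow> real mat" where
  "B_del n a i j k = submatrix (B_mat n a) ({0..<n+3} - {i-1, j-1, k-1}) {0..<n}"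

end

theory Submission imports Defs begin
definition coef :: "real \<Rightarrow> nat \<Rightarrow> nat \<Rightarrow> real" where
  "coef a r c = (if r = c then 1 else if r = c+1 then -a else if r = c+2 then a
     else if r = c+3 then -1 else 0)"

lemma B_entry: assumes "r < n+3" "c < n" shows "B_mat n a $$ (r,c) = coef a r c"
proof -
  have "B_mat n a $$ (r,c) = (if r = 0 then (if c = 0 then 1 else 0)
      else if r \<le> n + 1 then E_mat n a $$ (r - 1, c)
      else (if c = n - 1 then -1 else 0))" unfolding B_mat_def using assms by simp
  also have "\<dots> = coef a r c"
  proof (cases "r = 0")
    case True then show ?thesis by (simp add: coef_def)
  next
    case False
    show ?thesis
    proof (cases "r \<le> n+1")
      case True
      have "E_mat n a $$ (r - 1, c) = (if r - 1 = c then - a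
      else if c = r - 1 + 1 then 1
      else if r - 1 = c + 1 then a
      else if r - 1 = c + 2 then -1
      else 0)" unfolding E_mat_def using True assms False by simp
      then show ?thesis using True False unfolding coef_def by auto
    next
      case F2: False
      then show ?thesis using False assms unfolding coef_def by auto
    qed
  qed
  finally show ?thesis .
qed
lemma sum_coef: assumes "c < n"
  shows "(\<Sum>r<n+3. coef a r c * g r) = g c - a*g(c+1) + a*g(c+2) - g(c+3)"
proof -
  have "\<And>r. coef a r c * g r = (if r=c then g r else 0) + (if r = c+1 then -a*g r else 0)
     + (if r=c+2 then a*g r else 0) + (if r=c+3 then -g r else 0)"
    by (simp add: coef_def)
  then have "(\<Sum>r<n+3. coef a r c * g r) = (\<Sum>r<n+3. (if r=c then g r else 0) + (if r = c+1 then -a*g r else 0)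
     + (if r=c+2 then a*g r else 0) + (if r=c+3 then -g r else 0))" by simp
  also have "\<dots> = (\<Sum>r<n+3. (if r=c then g r else 0)) + (\<Sum>r<n+3. (if r = c+1 then -a*g r else 0))
     + (\<Sum>r<n+3. (if r=c+2 then a*g r else 0)) + (\<Sum>r<n+3. (if r=c+3 then -g r else 0))"
    by (simp only: sum.distrib)
  also have "\<dots> = g c - a*g(c+1) + a*g(c+2) - g(c+3)"
    using assms by (simp only: sum.delta finite_lessThan lessThan_iff) simp
  finally show ?thesis .
qed
lemma moment: fixes q :: "nat \<Rightarrow> real"
  shows "(\<Sum>r<n+3. (\<Sum>c<n. coef a r c * q c) * g r)
    = (\<Sum>c<n. q c * (g c - a*g(c+1) + a*g(c+2) - g(c+3)))"
proof -
  have "(\<Sum>r<n+3. (\<Sum>c<n. coef a r c * q c) * g r) = (\<Sum>r<n+3. \<Sum>c<n. q c * (coef a r c * g r))"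
    by (simp add: sum_distrib_right sum_distrib_left mult_ac)
  also have "\<dots> = (\<Sum>c<n. \<Sum>r<n+3. q c * (coef a r c * g r))"
    by (rule sum.swap)
  also have "\<dots> = (\<Sum>c<n. q c * (\<Sum>r<n+3. coef a r c * g r))"
    by (simp add: sum_distrib_left)
  also have "\<dots> = (\<Sum>c<n. q c * (g c - a*g(c+1) + a*g(c+2) - g(c+3)))"
    by (rule sum.cong) (auto simp: sum_coef)
  finally show ?thesis .
qed

lemma inj_conv: fixes q :: "nat \<Rightarrow> real"
  assumes "\<And>r. r < n+3 \<Longrightarrow> (\<Sum>c<n. coef a r c * q c) = 0"
  shows "c < n \<Longrightarrow> q c = 0"
proof (induction c rule: less_induct)
  case (less c)
  have "(\<Sum>c'<n. coef a c c' * q c') = (\<Sum>c'<n. if c' = c then q c' else 0)"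
  proof (rule sum.cong)
    fix c' assume "c' \<in> {..<n}"
    show "coef a c c' * q c' = (if c' = c then q c' else 0)"
    proof (cases "c' < c")
      case True then show ?thesis using less by (simp add: coef_def)
    next
      case False then show ?thesis by (auto simp: coef_def)
    qed
  qed simp
  then show ?case using assms[of c] less by simp
qed

lemma vand: fixes w1 w2 w3 x y z :: real
  assumes e1: "w1+w2+w3=0" and e2: "w1*x+w2*y+w3*z=0" and e3: "w1*x^2+w2*y^2+w3*z^2=0" and "x<y" "y<z"
  shows "w1=0 \<and> w2=0 \<and> w3 = 0"
proof -
  have "(y*z^2 - z*y^2)*(w1+w2+w3) - (z^2-y^2)*(w1*x+w2*y+w3*z) + (z-y)*(w1*x^2+w2*y^2+w3*z^2)
     = (y-x)*(z-x)*(z-y)*w1" by (simp add: algebra_simps power2_eq_square)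
  then have "(y-x)*(z-x)*(z-y)*w1 = 0" using e1 e2 e3 by simp
  then have h1: "w1 = 0" using assms(4,5) by auto
  then have "w2 = - w3" using e1 by simp
  then have "w3*(z-y) = 0" using e2 h1 by (simp add: algebra_simps)
  then show ?thesis using h1 e1 assms(5) by auto
qed

lemma expo: fixes w1 w2 w3 x y :: real
  assumes e1: "w1+w2+w3=0" and e2: "w1+w2*x+w3*x*y=0" and e3: "w1*x*y+w2*y+w3=0" and "x>1" "y>1"
  shows "w1=0 \<and> w2=0 \<and> w3 = 0"
proof -
  have "(x - x*y^2)*(w1+w2+w3) - (1-y)*(w1+w2*x+w3*x*y) + (x*y-x)*(w1*x*y+w2*y+w3)
     = (x-1)*(y-1)*(x*y-1)*w1" by (simp add: algebra_simps power2_eq_square)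
  then have "(x-1)*(y-1)*(x*y-1)*w1 = 0" using e1 e2 e3 by simp
  moreover have "x*y > 1" using assms(4,5) by (metis less_1_mult)
  ultimately have h1: "w1 = 0" using assms(4,5) by auto
  then have "w2 = - w3" using e1 by simp
  then have "w3*x*(y-1) = 0" using e2 h1 by (simp add: algebra_simps)
  then show ?thesis using h1 e1 assms(4,5) by auto
qed

lemma rec_root: fixes s a :: real assumes "s^2 - (a-1)*s + 1 = 0"
  shows "s^c - a*s^(c+1) + a*s^(c+2) - s^(c+3) = 0"
proof -
  have "s^c - a*s^(c+1) + a*s^(c+2) - s^(c+3) = s^c*(1-s)*(s^2 - (a-1)*s + 1)"
    by (simp add: power_add algebra_simps power2_eq_square power3_eq_cube)
  then show ?thesis using assms by simp
qed
lemma quad: fixes b s :: real assumes "s^2 = b^2 - 4" shows "((b+s)/2)^2 - b*((b+s)/2) + 1 = 0"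
proof -
  have "((b+s)/2)^2 - b*((b+s)/2) + 1 = (s^2 - b^2 + 4)/4"
    by (simp add: field_simps power2_eq_square)
  then show ?thesis using assms by simp
qed

theorem proposition5p1:
  fixes n :: nat and a :: real and i j k :: nat
  assumes "a = 3 \<or> a > 5"
    and "1 \<le> i" and "i < j" and "j < k" and "k \<le> n + 3"
  shows "det (B_del n a i j k) \<noteq> 0"
proof
  assume det0: "det (B_del n a i j k) = 0"
  define I where "I = {0..<n+3} - {i-1, j-1, k-1}"
  define M where "M = B_del n a i j k"
  have dr: "dim_row (B_mat n a) = n+3" and dc: "dim_col (B_mat n a) = n" by (simp_all add: B_mat_def)
  have I1: "{r. r < n+3 \<and> r \<in> I} = I" unfolding I_def by auto
  have dd: "i-1 \<noteq> j-1" "i-1 \<noteq> k-1" "j-1 \<noteq> k-1" using assms by auto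
  have "card {i-1, j-1, k-1} = 3" using dd by simp
  then have cI: "card I = n" unfolding I_def by (subst card_Diff_subset) (use assms in auto)
  have J1: "card {c. c < n \<and> c \<in> {0..<n}} = n" by simp
  have M_eq: "M = submatrix (B_mat n a) I {0..<n}" unfolding M_def B_del_def I_def ..
  have "dim_row M = n" unfolding M_eq dim_submatrix dr using I1 cI by simp
  moreover have "dim_col M = n" unfolding M_eq dim_submatrix dc by simp
  ultimately have Mc: "M \<in> carrier_mat n n" by (rule carrier_matI)
  obtain v where v: "v \<in> carrier_vec n" "v \<noteq> 0\<^sub>v n" "M *\<^sub>v v = 0\<^sub>v n"
    using det_0_iff_vec_prod_zero[OF Mc] det0 M_def by auto
  define q where "q c = v $ c" for c
  define w where "w r = (\<Sum>c<n. coef a r c * q c)" for r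
  have wI: "w r = 0" if rI: "r \<in> I" for r
  proof -
    have rn: "r < n+3" using rI unfolding I_def by auto
    define s where "s = card {x\<in>I. x < r}"
    have "{x\<in>I. x < r} \<subset> I" using rI by auto
    moreover have "finite I" unfolding I_def by simp
    ultimately have sn: "s < n" unfolding s_def using cI psubset_card_mono by metis
    have Ment: "M $$ (s, c) = coef a r c" if cn: "c < n" for c
    proof -
      have "{x\<in>{0..<n}. x < c} = {..<c}" using cn by auto
      then have "card {x\<in>{0..<n}. x < c} = c" by simp
      then have "M $$ (s, c) = submatrix (B_mat n a) I {0..<n} $$ (card {x\<in>I. x < r}, card {x\<in>{0..<n}. x < c})"
        unfolding M_def B_del_def s_def I_def by simp
      also have "\<dots> = B_mat n a $$ (r, c)"
        by (rule submatrix_index_card) (use rn cn rI dr dc in auto)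
      also have "\<dots> = coef a r c" using B_entry rn cn by simp
      finally show ?thesis .
    qed
    have "0 = (M *\<^sub>v v) $ s" using v(3) sn by simp
    also have "\<dots> = row M s \<bullet> v" using Mc sn by simp
    also have "\<dots> = (\<Sum>c\<in>{0..<n}. row M s $ c * v $ c)" unfolding scalar_prod_def using v(1) by simp
    also have "\<dots> = (\<Sum>c<n. coef a r c * q c)"
      using Mc sn Ment by (auto simp: q_def lessThan_atLeast0 intro!: sum.cong)
    finally show ?thesis unfolding w_def by simp
  qed
  define i' j' k' where "i' = i - 1" and "j' = j - 1" and "k' = k - 1"
  have ord: "i' < j'" "j' < k'" "k' < n+3" using assms unfolding i'_def j'_def k'_def by auto
  have key: "w i' * g i' + w j' * g j' + w k' * g k' = 0"
    if rec: "\<And>c. g c - a*g(c+1) + a*g(c+2) - g(c+3) = 0" for g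
  proof -
    have "(\<Sum>r<n+3. w r * g r) = (\<Sum>c<n. q c * (g c - a*g(c+1) + a*g(c+2) - g(c+3)))"
      unfolding w_def by (rule moment)
    also have "\<dots> = 0" using rec by simp
    finally have s0: "(\<Sum>r<n+3. w r * g r) = 0" .
    have "(\<Sum>r<n+3. w r * g r) = (\<Sum>r\<in>{i',j',k'}. w r * g r)"
      by (rule sum.mono_neutral_right) (use ord wI in \<open>auto simp: I_def i'_def j'_def k'_def\<close>)
    also have "\<dots> = w i' * g i' + w j' * g j' + w k' * g k'" using ord by simp
    finally show ?thesis using s0 by simp
  qed
  have w0: "w i' = 0 \<and> w j' = 0 \<and> w k' = 0"
  proof (cases "a = 3")
    case True
    have e1: "w i' + w j' + w k' = 0" using key[of "\<lambda>_. 1"] by simp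
    have "real c - a * real (c+1) + a * real (c+2) - real (c+3) = 0" for c
      using True by simp
    then have e2: "w i' * real i' + w j' * real j' + w k' * real k' = 0"
      using key[of "\<lambda>r. real r"] by blast
    have "(real c)^2 - a * (real (c+1))^2 + a * (real (c+2))^2 - (real (c+3))^2 = 0" for c
      using True by (simp add: power2_eq_square algebra_simps)
    then have e3: "w i' * (real i')^2 + w j' * (real j')^2 + w k' * (real k')^2 = 0"
      using key[of "\<lambda>r. (real r)^2"] by blast
    show ?thesis by (rule vand[OF e1 e2 e3]) (use ord in auto)
  next
    case False
    then have a5: "a > 5" using assms(1) by auto
    define \<rho> where "\<rho> = ((a-1) + sqrt ((a-1)^2 - 4)) / 2"
    have a4: "4 < a - 1" using a5 by simp
    then have "4*4 < (a-1)*(a-1)" by (intro mult_strict_mono) auto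
    then have dpos: "(a-1)^2 - 4 \<ge> 0" by (simp add: power2_eq_square)
    have sq: "sqrt ((a-1)^2 - 4) ^ 2 = (a-1)^2 - 4" using dpos by (rule real_sqrt_pow2)
    have sqp: "sqrt ((a-1)^2 - 4) \<ge> 0" using dpos by (rule real_sqrt_ge_zero)
    have "(a-1) + sqrt ((a-1)^2 - 4) > 2" using a5 sqp by linarith
    then have rho1: "\<rho> > 1" unfolding \<rho>_def by simp
    have rhoeq: "\<rho>^2 - (a-1)*\<rho> + 1 = 0"
      unfolding \<rho>_def by (rule quad[OF sq])
    have rinv: "(1/\<rho>)^2 - (a-1)*(1/\<rho>) + 1 = 0"
    proof -
      have "(1/\<rho>)^2 - (a-1)*(1/\<rho>) + 1 = (\<rho>^2 - (a-1)*\<rho> + 1) / \<rho>^2"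
        using rho1 by (simp add: field_simps power2_eq_square)
      then show ?thesis using rhoeq by simp
    qed
    have e1: "w i' + w j' + w k' = 0" using key[of "\<lambda>_. 1"] by simp
    have f2: "w i' * \<rho>^i' + w j' * \<rho>^j' + w k' * \<rho>^k' = 0"
      using key[of "\<lambda>r. \<rho>^r", OF rec_root[OF rhoeq]] .
    have f3: "w i' * (1/\<rho>)^i' + w j' * (1/\<rho>)^j' + w k' * (1/\<rho>)^k' = 0"
      using key[of "\<lambda>r. (1/\<rho>)^r", OF rec_root[OF rinv]] .
    define A x y where "A = \<rho>^i'" and "x = \<rho>^(j'-i')" and "y = \<rho>^(k'-j')"
    have A0: "A > 0" unfolding A_def using rho1 by simp
    have x1: "x > 1" unfolding x_def using rho1 ord by simp
    have y1: "y > 1" unfolding y_def using rho1 ord by simp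
    have pj: "\<rho>^j' = A*x" unfolding A_def x_def using ord by (simp add: power_add[symmetric])
    have pk: "\<rho>^k' = A*x*y" unfolding A_def x_def y_def using ord
      by (simp add: power_add[symmetric] mult.assoc)
    have "A * (w i' + w j' * x + w k' * x * y) = 0" using f2 pj pk unfolding A_def[symmetric]
      by (simp add: algebra_simps)
    then have e2: "w i' + w j' * x + w k' * x * y = 0" using A0 by simp
    have f3': "w i' * (1/A) + w j' * (1/(A*x)) + w k' * (1/(A*x*y)) = 0"
      using f3 pj pk unfolding A_def[symmetric] power_one_over by simp
    have "w i' * x * y + w j' * y + w k' = (A*x*y) * (w i' * (1/A) + w j' * (1/(A*x)) + w k' * (1/(A*x*y)))"
      using A0 x1 y1 by (simp add: field_simps)
    then have e3: "w i' * x * y + w j' * y + w k' = 0" using f3' by simp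
    show ?thesis by (rule expo[OF e1 e2 e3 x1 y1])
  qed
  have wall: "w r = 0" if "r < n+3" for r
  proof (cases "r \<in> I")
    case True then show ?thesis using wI by simp
  next
    case False then have "r = i' \<or> r = j' \<or> r = k'" using that unfolding I_def i'_def j'_def k'_def by auto
    then show ?thesis using w0 by auto
  qed
  have "q c = 0" if "c < n" for c
    by (rule inj_conv[of n a q c]) (use wall that in \<open>auto simp: w_def\<close>)
  then have "v = 0\<^sub>v n" using v(1) by (intro eq_vecI) (auto simp: q_def)
  then show False using v(2) by simp
qed
end
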